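(* There exists a vector subspace $V\subseteq C^0([0,1])$ of dimension $2^{\aleph_0}$ such that every non-zero $f\in V$ satisfies: for every $\alpha<1$ there is $C$ with $|f(x)-f(y)|\le C|x-y|^\alpha$ for all $x,y\in[0,1]$; $f$ has no finite one-sided derivative at any point of $[0,1]$; and every level set $\{x:f(x)=\lambda\}$, $\lambda\in\mathbb{R}$, has Hausdorff dimension $0$.
   Context: $C^0([0,1])$ denotes the space of continuous real-valued functions on $[0,1]$. *)

theory Defs
  imports "HOL-Analysis.Analysis" "HOL-Library.Function_Algebras" "HOL-Library.Equipollence"
begin

definition fscale :: "real \<Rightarrow> (real \<Rightarrow> real) \<Rightarrow> (real \<Rightarrow> real)" where
  "fscale c f = (\<lambda>x. c * f x)"

text \<open>C^0([0,1]) represented as continuous functions on [0,1], canonically extended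
  by zero outside [0,1] (so that it is a genuine set of functions closed under the
  pointwise operations; this is linearly isomorphic to C^0([0,1])).\<close>
definition C0_01 :: "(real \<Rightarrow> real) set" where
  "C0_01 = {f. continuous_on {0..1} f \<and> (\<forall>x. x \<notin> {0..1} \<longrightarrow> f x = 0)}"

definition hausdorff_pre :: "real \<Rightarrow> real \<Rightarrow> 'a::metric_space set \<Rightarrow> ennreal" where
  "hausdorff_pre s \<delta> A =
     (INF U \<in> {U :: nat \<Rightarrow> 'a set. A \<subseteq> (\<Union>i. U i) \<and>
                 (\<forall>i. bounded (U i) \<and> diameter (U i) \<le> \<delta>)}.
        (\<Sum>i. ennreal (diameter (U i) powr s)))"

text \<open>s-dimensional Hausdorff (outer) measure: limit as delta tends to 0,
  i.e. supremum over delta > 0 (the pre-measure is antitone in delta).\<close>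
definition hausdorff_measure :: "real \<Rightarrow> 'a::metric_space set \<Rightarrow> ennreal" where
  "hausdorff_measure s A = (SUP \<delta> \<in> {0<..}. hausdorff_pre s \<delta> A)"

definition hausdorff_dim :: "'a::metric_space set \<Rightarrow> ereal" where
  "hausdorff_dim A = Inf {ereal s | s. s \<ge> 0 \<and> hausdorff_measure s A = 0}"

end

theory Submission
  imports Defs
begin

definition tri :: "real \<Rightarrow> real" where
  "tri u = min (u - of_int \<lfloor>u\<rfloor>) (of_int \<lfloor>u\<rfloor> + 1 - u)"

lemma tri_nonneg: "0 \<le> tri u"
  unfolding tri_def by (simp add: floor_le_iff)

lemma tri_le_half: "tri u \<le> 1/2"
  unfolding tri_def by linarith

lemma tri_le_int: "tri u \<le> \<bar>u - of_int n\<bar>"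
proof -
  have "n \<le> \<lfloor>u\<rfloor> \<or> n \<ge> \<lfloor>u\<rfloor> + 1" by linarith
  then show ?thesis
  proof
    assume "n \<le> \<lfloor>u\<rfloor>"
    then have "real_of_int n \<le> of_int \<lfloor>u\<rfloor>" by simp
    then show ?thesis unfolding tri_def using of_int_floor_le[of u] by linarith
  next
    assume "n \<ge> \<lfloor>u\<rfloor> + 1"
    then have "real_of_int n \<ge> of_int \<lfloor>u\<rfloor> + 1" by linarith
    then show ?thesis unfolding tri_def using real_of_int_floor_add_one_gt[of u] by linarith
  qed
qed

lemma tri_attained: "\<exists>n. tri u = \<bar>u - of_int n\<bar>"
  unfolding tri_def
  by (metis (no_types, opaque_lifting) abs_of_nonneg abs_minus_commute diff_ge_0_iff_ge
      floor_le_iff min_def of_int_1 of_int_add of_int_floor_le real_of_int_floor_add_one_ge)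

lemma tri_char: assumes "\<And>m. \<bar>u - of_int n\<bar> \<le> \<bar>u - of_int m\<bar>" shows "tri u = \<bar>u - of_int n\<bar>"
proof -
  obtain m where m: "tri u = \<bar>u - of_int m\<bar>" using tri_attained by blast
  show ?thesis using tri_le_int[of u n] assms[of m] m by linarith
qed

lemma tri_lip: "\<bar>tri u - tri v\<bar> \<le> \<bar>u - v\<bar>"
proof -
  obtain n where n: "tri v = \<bar>v - of_int n\<bar>" using tri_attained by blast
  obtain m where m: "tri u = \<bar>u - of_int m\<bar>" using tri_attained by blast
  have "tri u \<le> \<bar>u - of_int n\<bar>" by (rule tri_le_int)
  moreover have "tri v \<le> \<bar>v - of_int m\<bar>" by (rule tri_le_int)
  ultimately show ?thesis using n m by linarith
qed

lemma tri_plus1: "tri (u + 1) = tri u"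
  unfolding tri_def by simp

lemma tri_minus1: "tri (u - 1) = tri u"
  using tri_plus1[of "u - 1"] by simp

lemma tri_even: "tri (- u) = tri u"
proof -
  have a: "tri (- v) \<le> tri v" for v
  proof -
    obtain n where n: "tri v = \<bar>v - of_int n\<bar>" using tri_attained by blast
    have "tri (- v) \<le> \<bar>- v - of_int (- n)\<bar>" by (rule tri_le_int)
    then show ?thesis using n by simp
  qed
  show ?thesis using a[of u] a[of "-u"] by simp
qed

lemma tri_piece:
  fixes i :: int
  assumes u: "of_int i / 2 \<le> u" "u \<le> (of_int i + 1) / 2"
    and v: "of_int i / 2 \<le> v" "v \<le> (of_int i + 1) / 2"
  shows "\<bar>tri u - tri v\<bar> = \<bar>u - v\<bar>"
proof (cases "even i")
  case True
  then obtain n where i: "i = 2 * n" by blast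
  have "tri w = w - of_int n" if "of_int n \<le> w" "w \<le> of_int n + 1/2" for w
  proof -
    have "tri w = \<bar>w - of_int n\<bar>"
    proof (rule tri_char)
      fix m
      show "\<bar>w - of_int n\<bar> \<le> \<bar>w - of_int m\<bar>"
      proof (cases "m \<le> n")
        case True then have "real_of_int m \<le> of_int n" by simp
        then show ?thesis using that by linarith
      next
        case False then have "real_of_int m \<ge> of_int n + 1" by linarith
        then show ?thesis using that by linarith
      qed
    qed
    then show ?thesis using that by simp
  qed
  moreover have "of_int n \<le> u" "u \<le> of_int n + 1/2" "of_int n \<le> v" "v \<le> of_int n + 1/2"
    using u v i by auto
  ultimately show ?thesis by simp
next
  case False
  then obtain n where i: "i = 2 * n + 1" by (metis odd_two_times_div_two_succ)
  have "tri w = of_int n + 1 - w" if "of_int n + 1/2 \<le> w" "w \<le> of_int n + 1" for w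
  proof -
    have "tri w = \<bar>w - of_int (n+1)\<bar>"
    proof (rule tri_char)
      fix m
      show "\<bar>w - of_int (n+1)\<bar> \<le> \<bar>w - of_int m\<bar>"
      proof (cases "m \<le> n")
        case True then have "real_of_int m \<le> of_int n" by simp
        moreover have "real_of_int (n+1) = of_int n + 1" by simp
        ultimately show ?thesis using that by linarith
      next
        case False then have "real_of_int m \<ge> of_int n + 1" by linarith
        moreover have "real_of_int (n+1) = of_int n + 1" by simp
        ultimately show ?thesis using that by linarith
      qed
    qed
    then show ?thesis using that by simp
  qed
  moreover have "of_int n + 1/2 \<le> u" "u \<le> of_int n + 1" "of_int n + 1/2 \<le> v" "v \<le> of_int n + 1"
    using u v i by auto
  ultimately show ?thesis by simp
qed

lemma tri_jump: "\<exists>t. 1/4 \<le> t \<and> t \<le> 1 \<and> \<bar>tri (u + t) - tri u\<bar> \<ge> 1/4"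
proof -
  define i where "i = \<lfloor>2 * u\<rfloor>"
  define p where "p = of_int i / (2::real)"
  have "of_int i \<le> 2*u" "2*u < of_int i + 1" unfolding i_def
    using of_int_floor_le[of "2*u"] real_of_int_floor_add_one_gt[of "2*u"] by auto
  then have pu: "p \<le> u" "u < p + 1/2" unfolding p_def by auto
  show ?thesis
  proof (cases "u - p \<le> 1/4")
    case True
    have "\<bar>tri (p + 1/2) - tri u\<bar> = \<bar>p + 1/2 - u\<bar>"
      by (rule tri_piece[of i]) (use pu in \<open>auto simp: p_def\<close>)
    then show ?thesis using True pu
      by (intro exI[of _ "p + 1/2 - u"]) auto
  next
    case False
    have "\<bar>tri p - tri u\<bar> = \<bar>p - u\<bar>"
      by (rule tri_piece[of i]) (use pu in \<open>auto simp: p_def\<close>)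
    moreover have "tri (u + (p + 1 - u)) = tri p" using tri_plus1[of p] by simp
    ultimately show ?thesis using False pu
      by (intro exI[of _ "p + 1 - u"]) auto
  qed
qed

lemma tri_jump_left: "\<exists>t. 1/4 \<le> t \<and> t \<le> 1 \<and> \<bar>tri (u - t) - tri u\<bar> \<ge> 1/4"
proof -
  obtain t where "1/4 \<le> t" "t \<le> 1" "\<bar>tri (- u + t) - tri (- u)\<bar> \<ge> 1/4"
    using tri_jump by blast
  moreover have "tri (- u + t) = tri (u - t)" using tri_even[of "u - t"] by simp
  ultimately show ?thesis using tri_even[of u] by auto
qed

definition ff :: "nat \<Rightarrow> nat" where "ff n = fact n"

lemma ff_Suc: "ff (Suc n) = Suc n * ff n"
  unfolding ff_def by (metis fact_Suc of_nat_id)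
lemma ff2: "ff (k+2) = (k+2) * ff (k+1)"
  using ff_Suc[of "k+1"] by (simp only: add_Suc_right numeral_2_eq_2 add_0_right one_add_one[symmetric] add.assoc) simp
lemma ff3: "ff (k+3) = (k+3) * ff (k+2)"
  using ff_Suc[of "k+2"] by (simp only: numeral_3_eq_3 numeral_2_eq_2 add_Suc_right)
lemma ff_ge_self: "n \<le> ff n" unfolding ff_def by (rule fact_ge_self)
lemma ff_pos: "1 \<le> ff n" unfolding ff_def using fact_ge_1 by blast
lemma ff_mono: "m \<le> n \<Longrightarrow> ff m \<le> ff n" unfolding ff_def by (rule fact_mono)

definition nb :: "nat \<Rightarrow> nat" where "nb k = 2 ^ (ff (k+2))"
definition bb :: "nat \<Rightarrow> real" where "bb k = real (nb k)"
definition AA :: "nat \<Rightarrow> real" where "AA k = 2 ^ (ff (k+1))"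
definition aa :: "nat \<Rightarrow> real" where "aa k = AA k / bb k"

lemma bb_pow: "bb k = 2 ^ (ff (k+2))" unfolding bb_def nb_def by simp

lemma pow2_mono: "(a::nat) \<le> b \<Longrightarrow> (2::real) ^ a \<le> 2 ^ b"
  by (rule power_increasing) auto

lemma pow2_frac: "(a::nat) + d \<le> c + b \<Longrightarrow> (2::real) ^ a / 2 ^ b \<le> 2 ^ c / 2 ^ d"
proof -
  assume "a + d \<le> c + b"
  then have "(2::real) ^ (a + d) \<le> 2 ^ (c + b)" by (rule pow2_mono)
  then have "(2::real) ^ a * 2 ^ d \<le> 2 ^ c * 2 ^ b" by (simp only: power_add)
  then show ?thesis by (simp add: divide_simps)
qed

lemma bb_pos: "bb k > 0" unfolding bb_pow by simp
lemma AA_pos: "AA k > 0" unfolding AA_def by simp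
lemma aa_pos: "aa k > 0" unfolding aa_def using AA_pos bb_pos by simp

lemma bb_ge: "bb k \<ge> 2 ^ k"
proof -
  have "k \<le> ff (k+2)" using ff_ge_self[of "k+2"] by linarith
  then show ?thesis unfolding bb_pow by (rule pow2_mono)
qed

lemma AA_ge: "AA k \<ge> 2 ^ k"
proof -
  have "k \<le> ff (k+1)" using ff_ge_self[of "k+1"] by linarith
  then show ?thesis unfolding AA_def by (rule pow2_mono)
qed

lemma AA_ge1: "AA k \<ge> 1"
  using AA_ge[of k] one_le_power[of "2::real" k] by linarith

lemma aa_bb: "aa k * bb k = AA k" using bb_pos[of k] by (simp add: aa_def)

lemma aa_eq: "aa k = 2 ^ ff (k+1) / 2 ^ ff (k+2)"
  unfolding aa_def AA_def bb_pow ..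

lemma aa_Suc: "aa (Suc k) \<le> aa k / 2"
proof -
  have "aa k / 2 = 2 ^ ff (k+1) / 2 ^ (ff (k+2) + 1)"
    unfolding aa_eq by (simp add: field_simps)
  moreover have "aa (Suc k) = 2 ^ ff (k+2) / 2 ^ ff (k+3)"
    unfolding aa_eq by (simp add: numeral_3_eq_3)
  moreover have "ff (k+2) + (ff (k+2) + 1) \<le> ff (k+1) + ff (k+3)"
    using ff3[of k] ff_pos[of "k+1"] by (simp add: algebra_simps)
  ultimately show ?thesis using pow2_frac by metis
qed

lemma aa_shift: "aa (j + k) \<le> aa k * (1/2) ^ j"
proof (induction j)
  case 0 then show ?case by simp
next
  case (Suc j)
  have "aa (Suc j + k) \<le> aa (j + k) / 2" using aa_Suc[of "j+k"] by simp
  also have "\<dots> \<le> aa k * (1/2) ^ j / 2" using Suc by simp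
  finally show ?case by simp
qed

lemma aa_le: "aa k \<le> (1/2) ^ k"
proof -
  have "ff (0+1) \<le> ff (0+2)" by (rule ff_mono) simp
  then have "AA 0 \<le> bb 0" unfolding AA_def bb_pow by (rule pow2_mono)
  then have a0: "aa 0 \<le> 1" unfolding aa_def using bb_pos[of 0] by simp
  have "aa k \<le> aa 0 * (1/2) ^ k" using aa_shift[of k 0] by simp
  also have "\<dots> \<le> 1 * (1/2) ^ k" by (rule mult_right_mono[OF a0]) simp
  finally show ?thesis by simp
qed

lemma summable_aa: "summable aa"
proof (rule summable_comparison_test'[of "\<lambda>k. (1/2::real)^k" 0])
  show "summable (\<lambda>k. (1/2::real)^k)" by (rule summable_geometric) simp
  fix n show "norm (aa n) \<le> (1/2)^n" using aa_le[of n] aa_pos[of n] by simp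
qed

lemma tail_aa: "summable (\<lambda>j. aa (j + Suc k))" "(\<Sum>j. aa (j + Suc k)) \<le> 2 * aa (Suc k)"
proof -
  have g: "summable (\<lambda>j. aa (Suc k) * (1/2::real)^j)"
    by (intro summable_mult summable_geometric) simp
  have le: "aa (j + Suc k) \<le> aa (Suc k) * (1/2::real)^j" for j by (rule aa_shift)
  show s: "summable (\<lambda>j. aa (j + Suc k))"
  proof (rule summable_comparison_test'[OF g, of 0])
    fix n show "norm (aa (n + Suc k)) \<le> aa (Suc k) * (1/2)^n"
      using le[of n] aa_pos[of "n + Suc k"] by simp
  qed
  have "(\<Sum>j. aa (j + Suc k)) \<le> (\<Sum>j. aa (Suc k) * (1/2::real)^j)"
    by (rule suminf_le[OF le s g])
  also have "\<dots> = aa (Suc k) * 2"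
    using suminf_geometric[of "1/2::real"] by (simp add: suminf_mult)
  finally show "(\<Sum>j. aa (j + Suc k)) \<le> 2 * aa (Suc k)" by simp
qed

lemma AA_sum: "(\<Sum>j<k. AA j) \<le> 2 * AA k / 2 ^ k"
proof -
  have "(\<Sum>j<k. AA j) \<le> (\<Sum>j<k. (2::real) ^ ff k)"
  proof (rule sum_mono)
    fix j assume "j \<in> {..<k}"
    then have "ff (j+1) \<le> ff k" by (intro ff_mono) simp
    then show "AA j \<le> 2 ^ ff k" unfolding AA_def by (rule pow2_mono)
  qed
  also have "\<dots> = real k * 2 ^ ff k" by simp
  also have "\<dots> \<le> 2 ^ k * 2 ^ ff k"
    by (intro mult_right_mono) (simp_all add: less_imp_le)
  also have "\<dots> = 2 ^ (2*k + ff k) / 2 ^ k" by (simp add: power_add mult_2)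
  also have "\<dots> \<le> 2 ^ (ff (k+1) + 1) / 2 ^ k"
  proof -
    have "2*k + ff k \<le> ff (k+1) + (1::nat)"
    proof (cases "k \<le> 1")
      case True
      then have "k = 0 \<or> k = 1" by auto
      then show ?thesis
      proof
        assume "k = 0"
        moreover have "ff 0 \<le> ff (0+1)" by (rule ff_mono) simp
        ultimately show ?thesis by simp
      next
        assume k1: "k = 1"
        have "ff (1+1) = 2 * ff 1" using ff_Suc[of 1] by simp
        then show ?thesis using k1 ff_pos[of 1] by simp
      qed
    next
      case False
      then have "2 \<le> ff k" using ff_ge_self[of k] by linarith
      then have "k * 2 \<le> k * ff k" by (rule mult_left_mono) simp
      moreover have "ff (k+1) = ff k + k * ff k" using ff_Suc[of k] by simp
      ultimately show ?thesis by linarith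
    qed
    then show ?thesis by (intro divide_right_mono pow2_mono) simp_all
  qed
  also have "\<dots> = 2 * AA k / 2 ^ k" unfolding AA_def by simp
  finally show ?thesis .
qed

lemma bb_aa_Suc: "bb k * aa (Suc k) \<le> 1"
proof -
  have "bb k * aa (Suc k) = 2 ^ (ff (k+2) + ff (k+2)) / 2 ^ ff (k+3)"
    unfolding bb_pow aa_eq by (simp add: power_add numeral_3_eq_3)
  also have "\<dots> \<le> 2 ^ 0 / 2 ^ 0"
  proof (rule pow2_frac)
    have "2 * ff (k+2) \<le> (k+3) * ff (k+2)" by (intro mult_right_mono) simp_all
    then show "ff (k + 2) + ff (k + 2) + 0 \<le> 0 + ff (k + 3)" using ff3[of k] by linarith
  qed
  finally show ?thesis by simp
qed

lemma pow2_powr: "(2::real) ^ n = 2 powr (real n)"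
  by (simp add: powr_realpow)

lemma half_pow_powr: "(2::real) powr (- real k) = (1/2) ^ k"
  by (simp add: powr_minus powr_realpow power_divide inverse_eq_divide)

lemma aa_Suc_eq: "aa (Suc k) = 2 ^ ff (k+2) / 2 ^ ff (k+3)"
  unfolding aa_eq by (simp add: numeral_3_eq_3)

lemma holder_summable:
  assumes "0 \<le> \<alpha>" "\<alpha> < 1"
  shows "summable (\<lambda>k. aa k * bb k powr \<alpha>)"
proof -
  obtain K :: nat where K: "2 / (1 - \<alpha>) \<le> real K" using real_arch_simple by blast
  have main: "norm (aa k * bb k powr \<alpha>) \<le> (1/2) ^ k" if "K \<le> k" for k
  proof -
    define f1 where "f1 = real (ff (k+1))"
    have f1k: "real k \<le> f1" unfolding f1_def using ff_ge_self[of "k+1"] by simp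
    have f2: "real (ff (k+2)) = (real k + 2) * f1" unfolding f1_def ff2 by (simp add: algebra_simps)
    have "2 / (1 - \<alpha>) \<le> real k + 2" using K that by (smt (verit) of_nat_mono)
    then have "2 \<le> (1 - \<alpha>) * (real k + 2)" using assms by (simp add: field_simps)
    then have "2 * f1 \<le> (1 - \<alpha>) * (real k + 2) * f1" using f1k
      by (intro mult_right_mono) simp_all
    then have ex: "f1 - (1 - \<alpha>) * ((real k + 2) * f1) \<le> - real k"
      using f1k by (simp add: algebra_simps)
    have "aa k * bb k powr \<alpha> = AA k * bb k powr (\<alpha> - 1)"
      using bb_pos[of k] by (simp add: aa_def powr_diff divide_simps)
    also have "\<dots> = 2 powr f1 * (2 powr ((real k + 2) * f1)) powr (\<alpha> - 1)"
      unfolding AA_def bb_pow pow2_powr f2 f1_def[symmetric] ..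
    also have "\<dots> = 2 powr (f1 - (1 - \<alpha>) * ((real k + 2) * f1))"
      by (simp add: powr_powr powr_add[symmetric] algebra_simps)
    also have "\<dots> \<le> 2 powr (- real k)" using ex by simp
    also have "\<dots> = (1/2) ^ k" by (rule half_pow_powr)
    finally show ?thesis using aa_pos[of k] bb_pos[of k] by simp
  qed
  show ?thesis
    by (rule summable_comparison_test'[of "\<lambda>k. (1/2::real)^k" K])
       (use main in \<open>simp_all add: summable_geometric\<close>)
qed

lemma half_pow_small: "0 < (\<epsilon>::real) \<Longrightarrow> \<forall>\<^sub>F k in sequentially. (1/2::real) ^ k < \<epsilon>"
  by (rule order_tendstoD(2)[OF LIMSEQ_realpow_zero]) simp_all

lemma level_small:
  assumes "0 < s" "0 < \<epsilon>"
  shows "\<forall>\<^sub>F k in sequentially. bb k * (aa (Suc k) / AA k) powr s \<le> \<epsilon>"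
proof -
  obtain K :: nat where K: "2 / s \<le> real K" using real_arch_simple by blast
  have "\<forall>\<^sub>F k in sequentially. bb k * (aa (Suc k) / AA k) powr s \<le> (1/2)^k"
    unfolding eventually_sequentially
  proof (intro exI allI impI)
    fix k assume "K \<le> k"
    define f1 where "f1 = real (ff (k+1))"
    define f2 where "f2 = real (ff (k+2))"
    have f2k: "real k \<le> f2" unfolding f2_def using ff_ge_self[of "k+2"] by simp
    have f1p: "0 \<le> f1" unfolding f1_def by simp
    have f3: "real (ff (k+3)) = (real k + 3) * f2" unfolding f2_def ff3 by (simp add: algebra_simps)
    have "2 / s \<le> real k + 2" using K \<open>K \<le> k\<close> by (smt (verit) of_nat_mono)
    then have "2 \<le> s * (real k + 2)" using assms by (simp add: field_simps)
    then have "2 * f2 \<le> s * (real k + 2) * f2" using f2k by (intro mult_right_mono) simp_all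
    moreover have "0 \<le> s * f1" using assms f1p by simp
    ultimately have ex: "f2 + s * (f2 - (real k + 3) * f2 - f1) \<le> - real k"
      using f2k by (simp add: algebra_simps)
    have "aa (Suc k) / AA k = (2 powr f2 / 2 powr ((real k + 3) * f2)) / 2 powr f1"
      unfolding aa_Suc_eq AA_def pow2_powr f3 f1_def[symmetric] f2_def[symmetric] ..
    also have "\<dots> = 2 powr (f2 - (real k + 3) * f2 - f1)"
      by (simp add: powr_diff)
    finally have "bb k * (aa (Suc k) / AA k) powr s = 2 powr f2 * (2 powr (f2 - (real k + 3) * f2 - f1)) powr s"
      unfolding bb_pow pow2_powr f2_def by simp
    also have "\<dots> = 2 powr (f2 + s * (f2 - (real k + 3) * f2 - f1))"
      by (simp add: powr_powr powr_add mult.commute)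
    also have "\<dots> \<le> 2 powr (- real k)" using ex by simp
    also have "\<dots> = (1/2) ^ k" by (rule half_pow_powr)
    finally show "bb k * (aa (Suc k) / AA k) powr s \<le> (1/2)^k" .
  qed
  moreover have "\<forall>\<^sub>F k in sequentially. (1/2::real) ^ k < \<epsilon>" by (rule half_pow_small[OF assms(2)])
  ultimately show ?thesis by eventually_elim simp
qed

definition trm :: "(nat \<Rightarrow> real) \<Rightarrow> real \<Rightarrow> nat \<Rightarrow> real" where
  "trm d x k = d k * aa k * tri (bb k * x)"

definition GG :: "(nat \<Rightarrow> real) \<Rightarrow> real \<Rightarrow> real" where
  "GG d x = (\<Sum>k. trm d x k)"

lemma abs_suminf_le:
  fixes f g :: "nat \<Rightarrow> real"
  assumes "summable g" "\<And>n. \<bar>f n\<bar> \<le> g n"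
  shows "summable f" "\<bar>suminf f\<bar> \<le> suminf g"
proof -
  show sf: "summable f"
    by (rule summable_comparison_test'[OF assms(1), of 0]) (use assms(2) in simp)
  have up: "f n \<le> g n" for n using assms(2)[of n] by arith
  have lo: "- g n \<le> f n" for n using assms(2)[of n] by arith
  have "suminf f \<le> suminf g" by (rule suminf_le[OF up sf assms(1)])
  moreover have "suminf (\<lambda>n. - g n) \<le> suminf f"
    by (rule suminf_le[OF lo summable_minus[OF assms(1)] sf])
  ultimately show "\<bar>suminf f\<bar> \<le> suminf g" using suminf_minus[OF assms(1)] by linarith
qed

lemma trm_bound:
  assumes "\<bar>d k\<bar> \<le> M"
  shows "\<bar>trm d x k\<bar> \<le> M * aa k / 2"
proof -
  have "\<bar>trm d x k\<bar> = \<bar>d k\<bar> * aa k * tri (bb k * x)"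
    unfolding trm_def using aa_pos[of k] tri_nonneg by (simp add: abs_mult)
  also have "\<dots> \<le> M * aa k * (1/2)"
    using assms aa_pos[of k] tri_nonneg tri_le_half
    by (intro mult_mono) (simp_all add: less_imp_le)
  finally show ?thesis by simp
qed

lemma summable_trm:
  assumes "\<And>k. \<bar>d k\<bar> \<le> M"
  shows "summable (trm d x)"
proof -
  have "summable (\<lambda>k. M * aa k / 2)" using summable_aa by (simp add: summable_divide summable_mult)
  then show ?thesis using abs_suminf_le(1) trm_bound assms by blast
qed

lemma GG_split:
  assumes "\<And>k. \<bar>d k\<bar> \<le> M"
  shows "GG d x = (\<Sum>j<k. trm d x j) + trm d x k + (\<Sum>j. trm d x (j + Suc k))"
  unfolding GG_def using suminf_split_initial_segment[OF summable_trm[OF assms], where k="Suc k"]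
  by simp

lemma tail_bound:
  assumes "\<And>k. \<bar>d k\<bar> \<le> M"
  shows "\<bar>\<Sum>j. trm d x (j + Suc k)\<bar> \<le> M * aa (Suc k)"
proof -
  have M: "0 \<le> M" using assms[of 0] by simp
  have s: "summable (\<lambda>j. M / 2 * aa (j + Suc k))" using tail_aa(1) by (rule summable_mult)
  have "\<bar>\<Sum>j. trm d x (j + Suc k)\<bar> \<le> (\<Sum>j. M / 2 * aa (j + Suc k))"
    by (rule abs_suminf_le(2)[OF s]) (use trm_bound assms in simp)
  also have "\<dots> = M / 2 * (\<Sum>j. aa (j + Suc k))" by (rule suminf_mult[OF tail_aa(1)])
  also have "\<dots> \<le> M / 2 * (2 * aa (Suc k))" by (rule mult_left_mono[OF tail_aa(2)]) (use M in simp)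
  finally show ?thesis by simp
qed

lemma trm_lip:
  assumes "\<bar>d k\<bar> \<le> M"
  shows "\<bar>trm d x k - trm d y k\<bar> \<le> M * AA k * \<bar>x - y\<bar>"
proof -
  have "\<bar>trm d x k - trm d y k\<bar> = \<bar>d k\<bar> * aa k * \<bar>tri (bb k * x) - tri (bb k * y)\<bar>"
    unfolding trm_def using aa_pos[of k] by (simp add: abs_mult right_diff_distrib[symmetric] mult.assoc)
  also have "\<dots> \<le> M * aa k * (bb k * \<bar>x - y\<bar>)"
  proof (intro mult_mono)
    show "\<bar>tri (bb k * x) - tri (bb k * y)\<bar> \<le> bb k * \<bar>x - y\<bar>"
      using tri_lip[of "bb k * x" "bb k * y"] bb_pos[of k]
      by (simp add: abs_mult right_diff_distrib[symmetric])
  qed (use assms aa_pos[of k] in \<open>simp_all add: less_imp_le\<close>)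
  also have "\<dots> = M * AA k * \<bar>x - y\<bar>" using aa_bb[of k] by (simp add: mult_ac)
  finally show ?thesis .
qed

lemma partial_lip:
  assumes "\<And>k. \<bar>d k\<bar> \<le> M"
  shows "\<bar>(\<Sum>j<k. trm d x j) - (\<Sum>j<k. trm d y j)\<bar> \<le> M * \<bar>x - y\<bar> * (2 * AA k / 2 ^ k)"
proof -
  have M: "0 \<le> M" using assms[of 0] by simp
  have "\<bar>(\<Sum>j<k. trm d x j) - (\<Sum>j<k. trm d y j)\<bar> = \<bar>\<Sum>j<k. trm d x j - trm d y j\<bar>"
    by (simp add: sum_subtractf)
  also have "\<dots> \<le> (\<Sum>j<k. \<bar>trm d x j - trm d y j\<bar>)" by (rule sum_abs)
  also have "\<dots> \<le> (\<Sum>j<k. M * \<bar>x - y\<bar> * AA j)"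
    by (rule sum_mono) (use trm_lip assms in \<open>simp add: mult_ac\<close>)
  also have "\<dots> = M * \<bar>x - y\<bar> * (\<Sum>j<k. AA j)" by (simp add: sum_distrib_left)
  also have "\<dots> \<le> M * \<bar>x - y\<bar> * (2 * AA k / 2 ^ k)"
    by (rule mult_left_mono[OF AA_sum]) (use M in simp)
  finally show ?thesis .
qed

lemma min_powr_le:
  fixes u v \<alpha> :: real
  assumes "0 \<le> u" "0 \<le> \<alpha>" "\<alpha> \<le> 1" "v \<le> 1" "v \<le> u"
  shows "v \<le> u powr \<alpha>"
proof (cases "1 \<le> u")
  case True then show ?thesis using ge_one_powr_ge_zero[OF True assms(2)] assms by linarith
next
  case False
  show ?thesis
  proof (cases "u = 0")
    case True then show ?thesis using assms by simp
  next
    case False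
    have "u powr 1 \<le> u powr \<alpha>" by (rule powr_mono') (use assms \<open>\<not> 1 \<le> u\<close> in auto)
    then show ?thesis using assms False by simp
  qed
qed

lemma GG_holder0:
  assumes "\<And>k. \<bar>d k\<bar> \<le> M" "0 \<le> \<alpha>" "\<alpha> < 1"
  shows "\<bar>GG d x - GG d y\<bar> \<le> (M * (\<Sum>k. aa k * bb k powr \<alpha>)) * \<bar>x - y\<bar> powr \<alpha>"
proof -
  have M: "0 \<le> M" using assms(1)[of 0] by simp
  define h where "h = \<bar>x - y\<bar>"
  have hs: "summable (\<lambda>k. M * (aa k * bb k powr \<alpha>) * h powr \<alpha>)"
    using holder_summable[OF assms(2,3)] by (intro summable_mult summable_mult2)
  have pt: "\<bar>trm d x k - trm d y k\<bar> \<le> M * (aa k * bb k powr \<alpha>) * h powr \<alpha>" for k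
  proof -
    have "\<bar>trm d x k - trm d y k\<bar> = \<bar>d k\<bar> * aa k * \<bar>tri (bb k * x) - tri (bb k * y)\<bar>"
      unfolding trm_def using aa_pos[of k] by (simp add: abs_mult right_diff_distrib[symmetric] mult.assoc)
    also have "\<dots> \<le> M * aa k * (bb k * h) powr \<alpha>"
    proof (intro mult_mono)
      have "\<bar>tri (bb k * x) - tri (bb k * y)\<bar> \<le> bb k * h"
        using tri_lip[of "bb k * x" "bb k * y"] bb_pos[of k] unfolding h_def
        by (simp add: abs_mult right_diff_distrib[symmetric])
      moreover have "\<bar>tri (bb k * x) - tri (bb k * y)\<bar> \<le> 1"
        using tri_nonneg[of "bb k * x"] tri_nonneg[of "bb k * y"] tri_le_half[of "bb k * x"]
          tri_le_half[of "bb k * y"] by linarith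
      ultimately show "\<bar>tri (bb k * x) - tri (bb k * y)\<bar> \<le> (bb k * h) powr \<alpha>"
        using assms bb_pos[of k] unfolding h_def by (intro min_powr_le) simp_all
    qed (use assms M aa_pos[of k] in \<open>simp_all add: less_imp_le\<close>)
    also have "\<dots> = M * (aa k * bb k powr \<alpha>) * h powr \<alpha>"
      using bb_pos[of k] unfolding h_def by (simp add: powr_mult mult_ac)
    finally show ?thesis .
  qed
  have "GG d x - GG d y = (\<Sum>k. trm d x k - trm d y k)"
    unfolding GG_def by (rule suminf_diff[OF summable_trm summable_trm]) (use assms in auto)
  then have "\<bar>GG d x - GG d y\<bar> \<le> (\<Sum>k. M * (aa k * bb k powr \<alpha>) * h powr \<alpha>)"
    using abs_suminf_le(2)[OF hs pt] by simp
  also have "\<dots> = (\<Sum>k. M * (aa k * bb k powr \<alpha>)) * h powr \<alpha>"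
    by (rule suminf_mult2[OF summable_mult[OF holder_summable[OF assms(2,3)]], symmetric])
  also have "\<dots> = (M * (\<Sum>k. aa k * bb k powr \<alpha>)) * h powr \<alpha>"
    by (simp add: suminf_mult[OF holder_summable[OF assms(2,3)]])
  finally show ?thesis unfolding h_def .
qed

lemma GG_holder:
  assumes "\<And>k. \<bar>d k\<bar> \<le> M" "\<alpha> < 1"
  shows "\<exists>C. 0 \<le> C \<and> (\<forall>x\<in>{0..1}. \<forall>y\<in>{0..1}. \<bar>GG d x - GG d y\<bar> \<le> C * \<bar>x - y\<bar> powr \<alpha>)"
proof -
  define \<beta> where "\<beta> = max \<alpha> 0"
  have b: "0 \<le> \<beta>" "\<beta> < 1" "\<alpha> \<le> \<beta>" unfolding \<beta>_def using assms by auto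
  define C where "C = M * (\<Sum>k. aa k * bb k powr \<beta>)"
  have C: "0 \<le> C" unfolding C_def using assms(1)[of 0] holder_summable[OF b(1,2)] aa_pos bb_pos
    by (intro mult_nonneg_nonneg suminf_nonneg) (auto intro: less_imp_le)
  have "\<bar>GG d x - GG d y\<bar> \<le> C * \<bar>x - y\<bar> powr \<alpha>" if "x \<in> {0..1}" "y \<in> {0..1}" for x y
  proof -
    have "\<bar>GG d x - GG d y\<bar> \<le> C * \<bar>x - y\<bar> powr \<beta>" unfolding C_def by (rule GG_holder0[OF assms(1) b(1,2)])
    also have "\<dots> \<le> C * \<bar>x - y\<bar> powr \<alpha>"
      by (intro mult_left_mono powr_mono') (use that b C in auto)
    finally show ?thesis .
  qed
  then show ?thesis using C by blast
qed

lemma GG_diff3: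
  assumes "\<And>k. \<bar>d k\<bar> \<le> M"
  shows "\<bar>GG d y - GG d x - (trm d y k - trm d x k)\<bar> \<le> M * \<bar>y - x\<bar> * (2 * AA k / 2 ^ k) + 2 * M * aa (Suc k)"
proof -
  have e: "GG d y - GG d x - (trm d y k - trm d x k) =
      ((\<Sum>j<k. trm d y j) - (\<Sum>j<k. trm d x j)) + ((\<Sum>j. trm d y (j + Suc k)) - (\<Sum>j. trm d x (j + Suc k)))"
    using GG_split[OF assms, where x=y and k=k] GG_split[OF assms, where x=x and k=k] by simp
  have "\<bar>(\<Sum>j<k. trm d y j) - (\<Sum>j<k. trm d x j)\<bar> \<le> M * \<bar>y - x\<bar> * (2 * AA k / 2 ^ k)"
    by (rule partial_lip[OF assms])
  moreover have "\<bar>\<Sum>j. trm d y (j + Suc k)\<bar> \<le> M * aa (Suc k)" by (rule tail_bound[OF assms])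
  moreover have "\<bar>\<Sum>j. trm d x (j + Suc k)\<bar> \<le> M * aa (Suc k)" by (rule tail_bound[OF assms])
  ultimately show ?thesis unfolding e by linarith
qed

lemma trm_diff_abs: "\<bar>trm d y k - trm d x k\<bar> = \<bar>d k\<bar> * aa k * \<bar>tri (bb k * y) - tri (bb k * x)\<bar>"
  unfolding trm_def using aa_pos[of k] by (simp add: abs_mult right_diff_distrib[symmetric] mult.assoc)

lemma jump_core:
  assumes d: "\<And>k. \<bar>d k\<bar> \<le> M" and m: "0 < m" "m \<le> \<bar>d k\<bar>" and big: "80 * M \<le> m * 2 ^ k"
    and h: "h = \<bar>y - x\<bar>" "1 / (4 * bb k) \<le> h" "h \<le> 1 / bb k"
    and t: "1/4 \<le> \<bar>tri (bb k * y) - tri (bb k * x)\<bar>"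
  shows "h * (m * AA k / 8) \<le> \<bar>GG d y - GG d x\<bar>"
proof -
  have M: "0 \<le> M" using d[of 0] by simp
  have bp: "0 < bb k" by (rule bb_pos)
  define q where "q = AA k / 2 ^ k"
  have q1: "1 \<le> q" unfolding q_def using AA_ge[of k] by simp
  have hp: "0 \<le> h" unfolding h by simp
  have hb4: "1 \<le> 4 * h * bb k" using h(2) bp by (simp add: field_simps)
  define Td where "Td = trm d y k - trm d x k"
  define Gd where "Gd = GG d y - GG d x"
  define X where "X = M * h * q"
  define Y where "Y = M * h"
  define Z where "Z = h * (m * AA k / 8)"
  have T: "m * aa k / 4 \<le> \<bar>Td\<bar>"
  proof -
    have "m * aa k * (1/4) \<le> \<bar>d k\<bar> * aa k * \<bar>tri (bb k * y) - tri (bb k * x)\<bar>"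
      by (intro mult_mono) (use m aa_pos[of k] t in \<open>auto intro: less_imp_le\<close>)
    then show ?thesis unfolding trm_diff_abs Td_def by simp
  qed
  have T2: "2 * Z \<le> m * aa k / 4"
  proof -
    have "h * AA k \<le> (1 / bb k) * AA k"
      by (rule mult_right_mono[OF h(3)]) (use AA_pos[of k] in \<open>simp add: less_imp_le\<close>)
    then have "h * AA k \<le> aa k" unfolding aa_def by simp
    then have "m * (h * AA k) \<le> m * aa k" using m by (intro mult_left_mono) simp_all
    then show ?thesis unfolding Z_def by (simp add: mult_ac)
  qed
  have R: "2 * M * aa (Suc k) \<le> 8 * Y"
  proof -
    have "aa (Suc k) \<le> 4 * h * bb k * aa (Suc k)" using hb4 aa_pos[of "Suc k"] by simp
    also have "\<dots> = 4 * h * (bb k * aa (Suc k))" by (simp add: mult_ac)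
    also have "\<dots> \<le> 4 * h * 1" by (rule mult_left_mono[OF bb_aa_Suc]) (use hp in simp)
    finally have "M * aa (Suc k) \<le> M * (4 * h)" using M by (intro mult_left_mono) simp_all
    then show ?thesis unfolding Y_def by (simp add: mult_ac)
  qed
  have E0: "\<bar>Gd - Td\<bar> \<le> M * \<bar>y - x\<bar> * (2 * AA k / 2 ^ k) + 2 * M * aa (Suc k)"
    unfolding Gd_def Td_def by (rule GG_diff3[OF d])
  have "M * \<bar>y - x\<bar> * (2 * AA k / 2 ^ k) = 2 * X" unfolding X_def q_def h by simp
  with E0 R have E: "\<bar>Gd - Td\<bar> \<le> 2 * X + 8 * Y" by linarith
  have "M * h * 1 \<le> M * h * q" by (rule mult_left_mono[OF q1]) (use M hp in simp)
  then have YX: "Y \<le> X" unfolding X_def Y_def by simp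
  have XZ: "10 * X \<le> Z"
  proof -
    have "80 * M * q \<le> m * 2 ^ k * q" using big q1 by (intro mult_right_mono) simp_all
    also have "\<dots> = m * AA k" unfolding q_def by simp
    finally have "10 * M * q \<le> m * AA k / 8" by simp
    then have "h * (10 * M * q) \<le> h * (m * AA k / 8)" using hp by (intro mult_left_mono) simp_all
    then show ?thesis unfolding X_def Z_def by (simp add: mult_ac)
  qed
  have tri: "\<bar>Td\<bar> \<le> \<bar>Gd\<bar> + \<bar>Gd - Td\<bar>" by arith
  have "Z \<le> \<bar>Gd\<bar>" using T T2 E YX XZ tri by linarith
  then show ?thesis unfolding Z_def Gd_def .
qed

lemma nondiff_right:
  assumes d: "\<And>k. \<bar>d k\<bar> \<le> M" and m: "0 < m" "m \<le> \<bar>d k\<bar>" and big: "80 * M \<le> m * 2 ^ k"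
  shows "\<exists>h. 1 / (4 * bb k) \<le> h \<and> h \<le> 1 / bb k \<and> h * (m * AA k / 8) \<le> \<bar>GG d (x + h) - GG d x\<bar>"
proof -
  obtain t where t: "1/4 \<le> t" "t \<le> 1" "\<bar>tri (bb k * x + t) - tri (bb k * x)\<bar> \<ge> 1/4"
    using tri_jump by blast
  define h where "h = t / bb k"
  have bp: "0 < bb k" by (rule bb_pos)
  have e: "bb k * (x + h) = bb k * x + t" unfolding h_def using bp by (simp add: field_simps)
  have h1: "1 / (4 * bb k) \<le> h" "h \<le> 1 / bb k" unfolding h_def using t bp by (simp_all add: field_simps)
  have "h * (m * AA k / 8) \<le> \<bar>GG d (x + h) - GG d x\<bar>"
    by (rule jump_core[where d=d and M=M and m=m and k=k and y="x+h" and x=x and h=h, OF d m big]) (use t e h1 bp in \<open>auto simp: abs_of_nonneg\<close>)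
  then show ?thesis using h1 by blast
qed

lemma nondiff_left:
  assumes d: "\<And>k. \<bar>d k\<bar> \<le> M" and m: "0 < m" "m \<le> \<bar>d k\<bar>" and big: "80 * M \<le> m * 2 ^ k"
  shows "\<exists>h. 1 / (4 * bb k) \<le> h \<and> h \<le> 1 / bb k \<and> h * (m * AA k / 8) \<le> \<bar>GG d (x - h) - GG d x\<bar>"
proof -
  obtain t where t: "1/4 \<le> t" "t \<le> 1" "\<bar>tri (bb k * x - t) - tri (bb k * x)\<bar> \<ge> 1/4"
    using tri_jump_left by blast
  define h where "h = t / bb k"
  have bp: "0 < bb k" by (rule bb_pos)
  have e: "bb k * (x - h) = bb k * x - t" unfolding h_def using bp by (simp add: field_simps)
  have h1: "1 / (4 * bb k) \<le> h" "h \<le> 1 / bb k" unfolding h_def using t bp by (simp_all add: field_simps)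
  have "h * (m * AA k / 8) \<le> \<bar>GG d (x - h) - GG d x\<bar>"
    by (rule jump_core[where d=d and M=M and m=m and k=k and y="x-h" and x=x and h=h, OF d m big]) (use t e h1 bp in \<open>auto simp: abs_of_nonneg\<close>)
  then show ?thesis using h1 by blast
qed

lemma level_core:
  assumes d: "\<And>k. \<bar>d k\<bar> \<le> M" and m: "0 < m" "m \<le> \<bar>d k\<bar>" and big: "8 * M \<le> m * 2 ^ k"
    and i: "of_int i / 2 \<le> bb k * x" "bb k * x \<le> (of_int i + 1) / 2"
           "of_int i / 2 \<le> bb k * y" "bb k * y \<le> (of_int i + 1) / 2"
    and eq: "GG d x = GG d y"
  shows "\<bar>x - y\<bar> \<le> 4 * M * aa (Suc k) / (m * AA k)"
proof -
  have M: "0 \<le> M" using d[of 0] by simp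
  have bp: "0 < bb k" by (rule bb_pos)
  have Ap: "0 < AA k" by (rule AA_pos)
  define q where "q = AA k / 2 ^ k"
  define Td where "Td = trm d y k - trm d x k"
  define Gd where "Gd = GG d y - GG d x"
  define W where "W = m * AA k * \<bar>x - y\<bar>"
  have T: "W \<le> \<bar>Td\<bar>"
  proof -
    have "\<bar>tri (bb k * y) - tri (bb k * x)\<bar> = \<bar>bb k * y - bb k * x\<bar>" by (rule tri_piece[OF i(3,4,1,2)])
    also have "\<dots> = bb k * \<bar>x - y\<bar>" using bp by (simp add: abs_mult right_diff_distrib[symmetric] abs_minus_commute)
    finally have "\<bar>Td\<bar> = \<bar>d k\<bar> * AA k * \<bar>x - y\<bar>"
      unfolding Td_def trm_diff_abs using aa_bb[of k] by (simp add: mult_ac)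
    moreover have "m * AA k * \<bar>x - y\<bar> \<le> \<bar>d k\<bar> * AA k * \<bar>x - y\<bar>"
      using m Ap by (intro mult_right_mono) simp_all
    ultimately show ?thesis unfolding W_def by simp
  qed
  have P: "M * \<bar>y - x\<bar> * (2 * AA k / 2 ^ k) \<le> W / 4"
  proof -
    have "8 * M * q \<le> m * 2 ^ k * q" using big AA_pos[of k] unfolding q_def by (intro mult_right_mono) simp_all
    also have "\<dots> = m * AA k" unfolding q_def by simp
    finally have "M * (2 * q) \<le> m * AA k / 4" by simp
    then have "M * (2 * q) * \<bar>x - y\<bar> \<le> m * AA k / 4 * \<bar>x - y\<bar>" by (rule mult_right_mono) simp
    then show ?thesis unfolding q_def W_def by (simp add: abs_minus_commute mult_ac)
  qed
  have E: "\<bar>Gd - Td\<bar> \<le> M * \<bar>y - x\<bar> * (2 * AA k / 2 ^ k) + 2 * M * aa (Suc k)"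
    unfolding Gd_def Td_def by (rule GG_diff3[OF d])
  have G0: "Gd = 0" unfolding Gd_def using eq by simp
  have "\<bar>Td\<bar> \<le> \<bar>Gd\<bar> + \<bar>Gd - Td\<bar>" by arith
  then have "W * (3/4) \<le> 2 * M * aa (Suc k)" using T P E G0 by linarith
  moreover have "2 * M * aa (Suc k) \<le> (4 * M * aa (Suc k)) * (3/4)"
    using mult_nonneg_nonneg[OF M less_imp_le[OF aa_pos[of "Suc k"]]] by simp
  ultimately have "W * (3/4) \<le> (4 * M * aa (Suc k)) * (3/4)" by linarith
  then have "W \<le> 4 * M * aa (Suc k)" by simp
  then have "(m * AA k) * \<bar>x - y\<bar> \<le> 4 * M * aa (Suc k)" unfolding W_def .
  then show ?thesis using m Ap by (simp add: field_simps mult.commute)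
qed

lemma pow_big: "0 < (c::real) \<Longrightarrow> \<forall>\<^sub>F k in sequentially. c < 2 ^ k"
proof -
  assume c: "0 < c"
  have "\<forall>\<^sub>F k in sequentially. (1/2::real) ^ k < 1 / c" by (rule half_pow_small) (use c in simp)
  then show ?thesis
  proof (rule eventually_mono)
    fix k :: nat assume "(1/2::real) ^ k < 1 / c"
    then have "1 / 2 ^ k < 1 / c" by (simp add: power_divide)
    then show "c < 2 ^ k" using c by (simp add: field_simps)
  qed
qed

lemma good_ev:
  assumes good: "\<And>K. \<exists>k\<ge>K. m \<le> \<bar>d k\<bar>" and ev: "\<forall>\<^sub>F k in sequentially. P k"
  shows "\<exists>k. m \<le> \<bar>d k\<bar> \<and> P k"
proof -
  obtain N where N: "\<And>k. N \<le> k \<Longrightarrow> P k" using ev unfolding eventually_sequentially by blast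
  obtain k where "k \<ge> N" "m \<le> \<bar>d k\<bar>" using good by blast
  then show ?thesis using N by blast
qed

lemma nd_right:
  assumes d: "\<And>k. \<bar>d k\<bar> \<le> M" and m: "0 < m" and good: "\<And>K. \<exists>k\<ge>K. m \<le> \<bar>d k\<bar>"
    and F: "\<And>y. y \<in> {0..1} \<Longrightarrow> F y = GG d y" and x: "x \<in> {0..<1}"
  shows "\<not> (F has_real_derivative D) (at x within {x..1})"
proof
  assume "(F has_real_derivative D) (at x within {x..1})"
  then have "((\<lambda>y. (F y - F x) / (y - x)) \<longlongrightarrow> D) (at x within {x..1})"
    by (simp add: has_field_derivative_iff)
  then have "\<forall>\<^sub>F y in at x within {x..1}. dist ((F y - F x) / (y - x)) D < 1"
    by (rule tendstoD) simp
  then obtain r where r: "r > 0" "\<And>y. y \<in> {x..1} \<Longrightarrow> y \<noteq> x \<Longrightarrow> dist y x < r \<Longrightarrow> dist ((F y - F x) / (y - x)) D < 1"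
    unfolding eventually_at by blast
  define r' where "r' = min r (1 - x)"
  have r': "0 < r'" using r x unfolding r'_def by auto
  have M: "0 \<le> M" using d[of 0] by simp
  have ev: "\<forall>\<^sub>F k in sequentially. 80 * M \<le> m * 2 ^ k \<and> 8 * (\<bar>D\<bar> + 1) < m * 2 ^ k \<and> 1 / r' < 2 ^ k"
  proof -
    have "\<forall>\<^sub>F k in sequentially. (80 * M + 1) / m < 2 ^ k" by (rule pow_big) (use m M in simp)
    moreover have "\<forall>\<^sub>F k in sequentially. 8 * (\<bar>D\<bar> + 1) / m < 2 ^ k" by (rule pow_big) (use m in simp)
    moreover have "\<forall>\<^sub>F k in sequentially. 1 / r' < 2 ^ k" by (rule pow_big) (use r' in simp)
    ultimately show ?thesis
      by eventually_elim (use m in \<open>auto simp: field_simps\<close>)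
  qed
  obtain k where k: "m \<le> \<bar>d k\<bar>" "80 * M \<le> m * 2 ^ k" "8 * (\<bar>D\<bar> + 1) < m * 2 ^ k" "1 / r' < 2 ^ k"
    using good_ev[OF good ev] by blast
  obtain h where h: "1 / (4 * bb k) \<le> h" "h \<le> 1 / bb k" "h * (m * AA k / 8) \<le> \<bar>GG d (x + h) - GG d x\<bar>"
    using nondiff_right[where d=d and M=M and m=m and k=k, OF d m k(1,2)] by blast
  have hp: "0 < h" using h(1) bb_pos[of k] by (smt (verit) divide_pos_pos)
  have "1 / bb k \<le> 1 / 2 ^ k" using bb_ge[of k] by (simp add: frac_le)
  also have "1 / 2 ^ k < r'" using k(4) r' by (simp add: field_simps)
  finally have hr: "h < r'" using h(2) by linarith
  define y where "y = x + h"
  have y: "y \<in> {x..1}" "y \<noteq> x" "dist y x < r" using hr hp x unfolding y_def r'_def dist_real_def by auto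
  have "y \<in> {0..1}" "x \<in> {0..1}" using y x by auto
  then have FF: "F y - F x = GG d (x + h) - GG d x" using F y_def by simp
  have q: "(F y - F x) / (y - x) = (GG d (x + h) - GG d x) / h" using FF y_def by simp
  have "m * 2 ^ k \<le> m * AA k" using AA_ge[of k] m by simp
  then have "8 * (\<bar>D\<bar> + 1) < m * AA k" using k(3) by linarith
  then have "(\<bar>D\<bar> + 1) < m * AA k / 8" by simp
  also have "m * AA k / 8 \<le> \<bar>(GG d (x + h) - GG d x) / h\<bar>"
    using h(3) hp by (simp add: field_simps abs_divide)
  finally have "\<bar>D\<bar> + 1 < \<bar>(F y - F x) / (y - x)\<bar>" using q by simp
  moreover have "dist ((F y - F x) / (y - x)) D < 1" using r(2) y by blast
  ultimately show False unfolding dist_real_def by linarith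
qed

lemma nd_left:
  assumes d: "\<And>k. \<bar>d k\<bar> \<le> M" and m: "0 < m" and good: "\<And>K. \<exists>k\<ge>K. m \<le> \<bar>d k\<bar>"
    and F: "\<And>y. y \<in> {0..1} \<Longrightarrow> F y = GG d y" and x: "x \<in> {0<..1}"
  shows "\<not> (F has_real_derivative D) (at x within {0..x})"
proof
  assume "(F has_real_derivative D) (at x within {0..x})"
  then have "((\<lambda>y. (F y - F x) / (y - x)) \<longlongrightarrow> D) (at x within {0..x})"
    by (simp add: has_field_derivative_iff)
  then have "\<forall>\<^sub>F y in at x within {0..x}. dist ((F y - F x) / (y - x)) D < 1"
    by (rule tendstoD) simp
  then obtain r where r: "r > 0" "\<And>y. y \<in> {0..x} \<Longrightarrow> y \<noteq> x \<Longrightarrow> dist y x < r \<Longrightarrow> dist ((F y - F x) / (y - x)) D < 1"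
    unfolding eventually_at by blast
  define r' where "r' = min r x"
  have r': "0 < r'" using r x unfolding r'_def by auto
  have M: "0 \<le> M" using d[of 0] by simp
  have ev: "\<forall>\<^sub>F k in sequentially. 80 * M \<le> m * 2 ^ k \<and> 8 * (\<bar>D\<bar> + 1) < m * 2 ^ k \<and> 1 / r' < 2 ^ k"
  proof -
    have "\<forall>\<^sub>F k in sequentially. (80 * M + 1) / m < 2 ^ k" by (rule pow_big) (use m M in simp)
    moreover have "\<forall>\<^sub>F k in sequentially. 8 * (\<bar>D\<bar> + 1) / m < 2 ^ k" by (rule pow_big) (use m in simp)
    moreover have "\<forall>\<^sub>F k in sequentially. 1 / r' < 2 ^ k" by (rule pow_big) (use r' in simp)
    ultimately show ?thesis
      by eventually_elim (use m in \<open>auto simp: field_simps\<close>)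
  qed
  obtain k where k: "m \<le> \<bar>d k\<bar>" "80 * M \<le> m * 2 ^ k" "8 * (\<bar>D\<bar> + 1) < m * 2 ^ k" "1 / r' < 2 ^ k"
    using good_ev[OF good ev] by blast
  obtain h where h: "1 / (4 * bb k) \<le> h" "h \<le> 1 / bb k" "h * (m * AA k / 8) \<le> \<bar>GG d (x - h) - GG d x\<bar>"
    using nondiff_left[where d=d and M=M and m=m and k=k, OF d m k(1,2)] by blast
  have hp: "0 < h" using h(1) bb_pos[of k] by (smt (verit) divide_pos_pos)
  have "1 / bb k \<le> 1 / 2 ^ k" using bb_ge[of k] by (simp add: frac_le)
  also have "1 / 2 ^ k < r'" using k(4) r' by (simp add: field_simps)
  finally have hr: "h < r'" using h(2) by linarith
  define y where "y = x - h"
  have y: "y \<in> {0..x}" "y \<noteq> x" "dist y x < r" using hr hp x unfolding y_def r'_def dist_real_def by auto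
  have "y \<in> {0..1}" "x \<in> {0..1}" using y x by auto
  then have FF: "F y - F x = GG d (x - h) - GG d x" using F y_def by simp
  have yx: "y - x = - h" unfolding y_def by simp
  have q: "\<bar>(F y - F x) / (y - x)\<bar> = \<bar>(GG d (x - h) - GG d x) / h\<bar>" unfolding FF yx
    by (simp add: abs_divide)
  have "m * 2 ^ k \<le> m * AA k" using AA_ge[of k] m by simp
  then have "8 * (\<bar>D\<bar> + 1) < m * AA k" using k(3) by linarith
  then have "(\<bar>D\<bar> + 1) < m * AA k / 8" by simp
  also have "m * AA k / 8 \<le> \<bar>(GG d (x - h) - GG d x) / h\<bar>"
    using h(3) hp by (simp add: field_simps abs_divide)
  finally have "\<bar>D\<bar> + 1 < \<bar>(F y - F x) / (y - x)\<bar>" using q by simp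
  moreover have "dist ((F y - F x) / (y - x)) D < 1" using r(2) y by blast
  ultimately show False unfolding dist_real_def by linarith
qed

lemma level_pre0:
  assumes d: "\<And>k. \<bar>d k\<bar> \<le> M" and m: "0 < m" and good: "\<And>K. \<exists>k\<ge>K. m \<le> \<bar>d k\<bar>"
    and F: "\<And>y. y \<in> {0..1} \<Longrightarrow> F y = GG d y"
    and s: "0 < s" and \<delta>: "0 < \<delta>"
  shows "hausdorff_pre s \<delta> {x \<in> {0..1}. F x = c} = 0"
proof -
  define L where "L = {x \<in> {0..1}. F x = c}"
  obtain k0 where "m \<le> \<bar>d k0\<bar>" using good by blast
  then have mM: "m \<le> M" using d[of k0] by linarith
  then have Mp: "0 < M" using m by linarith
  define C0 where "C0 = 4 * M / m"
  have C0: "0 < C0" unfolding C0_def using Mp m by simp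
  have "hausdorff_pre s \<delta> L \<le> 0 + ennreal \<epsilon>" if \<epsilon>: "0 < \<epsilon>" for \<epsilon>
  proof -
    have ev: "\<forall>\<^sub>F k in sequentially. 8 * M / m < 2 ^ k \<and> (1/2) ^ k < \<delta> / C0 \<and>
               bb k * (aa (Suc k) / AA k) powr s \<le> \<epsilon> / (3 * C0 powr s)"
    proof -
      have "\<forall>\<^sub>F k in sequentially. 8 * M / m < 2 ^ k" by (rule pow_big) (use Mp m in simp)
      moreover have "\<forall>\<^sub>F k in sequentially. (1/2::real) ^ k < \<delta> / C0" by (rule half_pow_small) (use \<delta> C0 in simp)
      moreover have "\<forall>\<^sub>F k in sequentially. bb k * (aa (Suc k) / AA k) powr s \<le> \<epsilon> / (3 * C0 powr s)"
        by (rule level_small[OF s]) (use \<epsilon> C0 in simp)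
      ultimately show ?thesis by eventually_elim blast
    qed
    obtain k where k: "m \<le> \<bar>d k\<bar>" "8 * M / m < 2 ^ k" "(1/2) ^ k < \<delta> / C0"
        "bb k * (aa (Suc k) / AA k) powr s \<le> \<epsilon> / (3 * C0 powr s)"
      using good_ev[OF good ev] by blast
    have big: "8 * M \<le> m * 2 ^ k" using k(2) m by (simp add: field_simps)
    define w where "w = C0 * (aa (Suc k) / AA k)"
    have w0: "0 \<le> w" unfolding w_def using C0 aa_pos[of "Suc k"] AA_pos[of k] by simp
    have wd: "w \<le> \<delta>"
    proof -
      have "aa (Suc k) / AA k \<le> aa (Suc k)" using AA_ge1[of k] aa_pos[of "Suc k"]
        by (simp add: divide_le_eq mult_le_cancel_left1)
      also have "\<dots> \<le> (1/2) ^ Suc k" by (rule aa_le)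
      also have "\<dots> \<le> (1/2) ^ k" by (simp add: power_decreasing)
      finally have ak: "aa (Suc k) / AA k \<le> (1/2) ^ k" .
      have "w \<le> C0 * (1/2) ^ k" unfolding w_def by (rule mult_left_mono[OF ak]) (use C0 in simp)
      also have "\<dots> < \<delta>" using k(3) C0 by (simp add: field_simps)
      finally show ?thesis by simp
    qed
    define N where "N = 2 * nb k"
    define U where "U i = (if i \<le> N then {x \<in> L. real i / 2 \<le> bb k * x \<and> bb k * x \<le> (real i + 1) / 2} else {})" for i
    have UL: "U i \<subseteq> {0..1}" for i unfolding U_def L_def by auto
    have Ub: "bounded (U i)" for i by (rule bounded_subset[OF _ UL]) simp
    have Ud: "diameter (U i) \<le> w" for i
    proof (rule diameter_le)
      show "U i \<noteq> {} \<or> 0 \<le> w" using w0 by simp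
      fix x y assume xy: "x \<in> U i" "y \<in> U i"
      then have iN: "i \<le> N" unfolding U_def by (auto split: if_splits)
      have xi: "x \<in> L" "real i / 2 \<le> bb k * x" "bb k * x \<le> (real i + 1) / 2"
        and yi: "y \<in> L" "real i / 2 \<le> bb k * y" "bb k * y \<le> (real i + 1) / 2"
        using xy iN unfolding U_def by auto
      have "GG d x = GG d y" using xi(1) yi(1) F unfolding L_def by auto
      then have "\<bar>x - y\<bar> \<le> 4 * M * aa (Suc k) / (m * AA k)"
        by (intro level_core[where d=d and M=M and m=m and k=k and i="int i", OF d m k(1) big])
           (use xi yi in simp_all)
      also have "\<dots> = w" unfolding w_def C0_def by simp
      finally show "norm (x - y) \<le> w" by simp
    qed
    have cover: "L \<subseteq> (\<Union>i. U i)"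
    proof
      fix x assume x: "x \<in> L"
      then have x01: "0 \<le> x" "x \<le> 1" unfolding L_def by auto
      define j where "j = \<lfloor>2 * bb k * x\<rfloor>"
      have j0: "0 \<le> j" unfolding j_def using x01 bb_pos[of k] by simp
      have j1: "of_int j \<le> 2 * bb k * x" "2 * bb k * x < of_int j + 1" unfolding j_def by linarith+
      have "2 * bb k * x \<le> 2 * bb k" using x01 bb_pos[of k] by simp
      then have "of_int j \<le> real N" using j1 unfolding N_def bb_def by simp
      then have jN: "nat j \<le> N" using j0 by linarith
      have rj: "real (nat j) = of_int j" using j0 by simp
      have "x \<in> U (nat j)" unfolding U_def using jN x j1 rj by auto
      then show "x \<in> (\<Union>i. U i)" by blast
    qed
    have inset: "U \<in> {U :: nat \<Rightarrow> real set. L \<subseteq> (\<Union>i. U i) \<and> (\<forall>i. bounded (U i) \<and> diameter (U i) \<le> \<delta>)}"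
    proof -
      have "\<forall>i. bounded (U i) \<and> diameter (U i) \<le> \<delta>" using Ub Ud wd by (meson order_trans)
      then show ?thesis using cover by blast
    qed
    have "hausdorff_pre s \<delta> L \<le> (\<Sum>i. ennreal (diameter (U i) powr s))"
      unfolding hausdorff_pre_def by (rule INF_lower[OF inset])
    also have "\<dots> = (\<Sum>i<Suc N. ennreal (diameter (U i) powr s))"
      by (rule suminf_finite) (auto simp: U_def)
    also have "\<dots> \<le> (\<Sum>i<Suc N. ennreal (w powr s))"
    proof (rule sum_mono)
      fix i
      have "diameter (U i) powr s \<le> w powr s"
        by (rule powr_mono2) (use s Ud diameter_ge_0[OF Ub] in auto)
      then show "ennreal (diameter (U i) powr s) \<le> ennreal (w powr s)" by (rule ennreal_leI)
    qed
    also have "\<dots> = ennreal (\<Sum>i<Suc N. w powr s)" by (rule sum_ennreal) simp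
    also have "\<dots> = ennreal (real (Suc N) * w powr s)" by simp
    also have "\<dots> \<le> ennreal \<epsilon>"
    proof (rule ennreal_leI)
      have nb1: "1 \<le> bb k" using bb_ge[of k] one_le_power[of "2::real" k] by linarith
      have "real (Suc N) \<le> 3 * bb k" unfolding N_def bb_def using nb1 unfolding bb_def by simp
      then have a1: "real (Suc N) * w powr s \<le> 3 * bb k * w powr s" by (rule mult_right_mono) simp
      have wp: "w powr s = C0 powr s * (aa (Suc k) / AA k) powr s"
        unfolding w_def by (rule powr_mult)
      have "3 * bb k * w powr s = 3 * C0 powr s * (bb k * (aa (Suc k) / AA k) powr s)"
        unfolding wp by (simp add: mult_ac)
      also have "\<dots> \<le> 3 * C0 powr s * (\<epsilon> / (3 * C0 powr s))"
        by (rule mult_left_mono[OF k(4)]) (use C0 in simp)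
      also have "\<dots> = \<epsilon>" using C0 by simp
      finally have "3 * bb k * w powr s \<le> \<epsilon>" .
      with a1 have "real (Suc N) * w powr s \<le> \<epsilon>" by linarith
      then show "real (Suc N) * w powr s \<le> \<epsilon>" .
    qed
    finally show ?thesis by simp
  qed
  then have "hausdorff_pre s \<delta> L \<le> 0" by (rule ennreal_le_epsilon) blast
  then show ?thesis unfolding L_def by simp
qed

lemma level_dim0:
  assumes d: "\<And>k. \<bar>d k\<bar> \<le> M" and m: "0 < m" and good: "\<And>K. \<exists>k\<ge>K. m \<le> \<bar>d k\<bar>"
    and F: "\<And>y. y \<in> {0..1} \<Longrightarrow> F y = GG d y"
  shows "hausdorff_dim {x \<in> {0..1}. F x = c} = 0"
proof -
  define L where "L = {x \<in> {0..1}. F x = c}"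
  have H: "hausdorff_measure s L = 0" if s: "0 < s" for s
  proof -
    have "(SUP \<delta> \<in> {0<..}. hausdorff_pre s \<delta> L) = (SUP (\<delta>::real) \<in> {0<..}. (0::ennreal))"
      by (rule SUP_cong) (use level_pre0[OF d m good F s] in \<open>auto simp: L_def\<close>)
    also have "\<dots> = 0" by (simp add: SUP_constant)
    finally show ?thesis unfolding hausdorff_measure_def .
  qed
  define S where "S = {ereal s | s. s \<ge> 0 \<and> hausdorff_measure s L = 0}"
  have lo: "0 \<le> Inf S" unfolding S_def by (rule Inf_greatest) auto
  have up: "Inf S \<le> 0"
  proof (rule ereal_le_epsilon2)
    fix e :: real assume e: "0 < e"
    have "ereal e \<in> S" unfolding S_def using e H[OF e] by auto
    then have "Inf S \<le> ereal e" by (rule Inf_lower)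
    then show "Inf S \<le> 0 + ereal e" by simp
  qed
  have "Inf S = 0" using lo up by (rule antisym[rotated])
  then show ?thesis unfolding hausdorff_dim_def S_def L_def .
qed

interpretation fs: module fscale
  by unfold_locales (auto simp: fscale_def fun_eq_iff algebra_simps)

definition pref :: "nat set \<Rightarrow> nat \<Rightarrow> nat" where
  "pref t n = to_nat (map (\<lambda>i. i \<in> t) [0..<n])"

definition chi :: "nat set \<Rightarrow> nat \<Rightarrow> real" where
  "chi t k = (if \<exists>n. pref t n = k then 1 else 0)"

definition fb :: "nat set \<Rightarrow> real \<Rightarrow> real" where
  "fb t x = (if x \<in> {0..1} then GG (chi t) x else 0)"

definition dd :: "nat set set \<Rightarrow> (nat set \<Rightarrow> real) \<Rightarrow> nat \<Rightarrow> real" where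
  "dd T c k = (\<Sum>t\<in>T. c t * chi t k)"

lemma chi_bound: "\<bar>chi t k\<bar> \<le> 1" unfolding chi_def by simp

lemma sum_fun_apply': "(\<Sum>t\<in>T. f t) x = (\<Sum>t\<in>T. f t x)"
  by (induction T rule: infinite_finite_induct) auto

lemma dd_bound: "\<bar>dd T c k\<bar> \<le> (\<Sum>t\<in>T. \<bar>c t\<bar>)"
proof -
  have "\<bar>dd T c k\<bar> \<le> (\<Sum>t\<in>T. \<bar>c t * chi t k\<bar>)" unfolding dd_def by (rule sum_abs)
  also have "\<dots> \<le> (\<Sum>t\<in>T. \<bar>c t\<bar>)"
  proof (rule sum_mono)
    fix t show "\<bar>c t * chi t k\<bar> \<le> \<bar>c t\<bar>"
      using chi_bound[of t k] by (simp add: abs_mult mult_left_le)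
  qed
  finally show ?thesis .
qed

lemma combo_eq:
  assumes "finite T"
  shows "(\<Sum>t\<in>T. fscale (c t) (fb t)) x = (if x \<in> {0..1} then GG (dd T c) x else 0)"
proof (cases "x \<in> {0..1}")
  case False then show ?thesis unfolding sum_fun_apply' fscale_def fb_def if_not_P[OF False] by simp
next
  case True
  have s: "summable (trm (chi t) x)" for t by (rule summable_trm[OF chi_bound])
  have "(\<Sum>t\<in>T. fscale (c t) (fb t)) x = (\<Sum>t\<in>T. c t * (\<Sum>k. trm (chi t) x k))"
    using True by (simp add: sum_fun_apply' fscale_def fb_def GG_def)
  also have "\<dots> = (\<Sum>t\<in>T. \<Sum>k. c t * trm (chi t) x k)"
    by (simp add: suminf_mult[OF s])
  also have "\<dots> = (\<Sum>k. \<Sum>t\<in>T. c t * trm (chi t) x k)"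
    by (rule suminf_sum[symmetric]) (use s in \<open>simp add: summable_mult\<close>)
  also have "\<dots> = (\<Sum>k. trm (dd T c) x k)"
  proof (rule suminf_cong)
    fix k show "(\<Sum>t\<in>T. c t * trm (chi t) x k) = trm (dd T c) x k"
      unfolding trm_def dd_def by (simp add: sum_distrib_right mult.assoc)
  qed
  finally show ?thesis using True by (simp add: GG_def)
qed

lemma pref_inj: "inj (pref t)"
proof
  fix n n' assume "pref t n = pref t n'"
  then have "map (\<lambda>i. i \<in> t) [0..<n] = map (\<lambda>i. i \<in> t) [0..<n']"
    unfolding pref_def using inj_to_nat by (metis injD)
  then show "n = n'" by (metis length_map length_upt minus_nat.diff_0)
qed

lemma inj_unbounded:
  fixes f :: "nat \<Rightarrow> nat"
  assumes "inj f"
  shows "\<exists>n\<ge>N. K \<le> f n"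
proof (rule ccontr)
  assume "\<not> ?thesis"
  then have h: "\<And>n. N \<le> n \<Longrightarrow> f n < K" by (meson leI)
  then have "f ` {N..<N + Suc K} \<subseteq> {..<K}" by auto
  then have "card (f ` {N..<N + Suc K}) \<le> card {..<K}" by (intro card_mono) auto
  moreover have "card (f ` {N..<N + Suc K}) = Suc K"
    using card_image[OF inj_on_subset[OF assms subset_UNIV]] by simp
  ultimately show False by simp
qed

lemma dd_good:
  assumes T: "finite T" "t0 \<in> T"
  shows "\<exists>k\<ge>K. dd T c k = c t0"
proof -
  have "\<forall>s\<in>T - {t0}. \<exists>j. (j \<in> s) \<noteq> (j \<in> t0)" by blast
  then obtain J where J: "\<And>s. s \<in> T - {t0} \<Longrightarrow> (J s \<in> s) \<noteq> (J s \<in> t0)" by metis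
  define N0 where "N0 = Suc (\<Sum>s\<in>T - {t0}. J s)"
  have JN: "J s < N0" if "s \<in> T - {t0}" for s
    using member_le_sum[of s "T - {t0}" J] that T(1) unfolding N0_def by simp
  obtain n where n: "n \<ge> N0" "K \<le> pref t0 n" using inj_unbounded[OF pref_inj] by blast
  define k where "k = pref t0 n"
  have c1: "chi t0 k = 1" unfolding chi_def k_def by auto
  have c0: "chi s k = 0" if s: "s \<in> T - {t0}" for s
  proof (rule ccontr)
    assume "chi s k \<noteq> 0"
    then obtain n' where "pref s n' = pref t0 n" unfolding chi_def k_def by (auto split: if_splits)
    then have e: "map (\<lambda>i. i \<in> s) [0..<n'] = map (\<lambda>i. i \<in> t0) [0..<n]"
      unfolding pref_def using inj_to_nat by (metis injD)
    then have "n' = n" by (metis length_map length_upt minus_nat.diff_0)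
    have jn: "J s < n" using JN[OF s] n(1) by simp
    have "\<forall>i\<in>{0..<n}. (i \<in> s) = (i \<in> t0)"
      using e \<open>n' = n\<close> by (simp add: map_eq_conv)
    then have "(J s \<in> s) = (J s \<in> t0)" using jn by simp
    then show False using J[OF s] by simp
  qed
  have "dd T c k = c t0 * chi t0 k + (\<Sum>s\<in>T - {t0}. c s * chi s k)"
    unfolding dd_def using T by (simp add: sum.remove)
  also have "\<dots> = c t0" using c1 c0 by simp
  finally show ?thesis using n(2) unfolding k_def by blast
qed

lemma holder_cont:
  fixes f :: "real \<Rightarrow> real"
  assumes C: "0 \<le> C" and H: "\<And>x y. x \<in> S \<Longrightarrow> y \<in> S \<Longrightarrow> \<bar>f x - f y\<bar> \<le> C * \<bar>x - y\<bar> powr (1/2)"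
  shows "continuous_on S f"
  unfolding continuous_on_iff
proof (intro ballI allI impI)
  fix x e :: real assume x: "x \<in> S" and e: "0 < e"
  define r where "r = (e / (C + 1))\<^sup>2"
  have r: "0 < r" unfolding r_def using e C by simp
  have "dist (f y) (f x) < e" if y: "y \<in> S" "dist y x < r" for y
  proof -
    have "\<bar>y - x\<bar> powr (1/2) = sqrt \<bar>y - x\<bar>" by (simp add: powr_half_sqrt)
    also have "\<dots> < sqrt r" using y(2) unfolding dist_real_def by simp
    also have "sqrt r = e / (C + 1)" unfolding r_def using e C by simp
    finally have lt: "\<bar>y - x\<bar> powr (1/2) < e / (C + 1)" .
    have "\<bar>f y - f x\<bar> \<le> C * \<bar>y - x\<bar> powr (1/2)" using H[OF y(1) x] .
    also have "\<dots> \<le> (C + 1) * \<bar>y - x\<bar> powr (1/2)" by (simp add: mult_right_mono)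
    also have "\<dots> < (C + 1) * (e / (C + 1))" using lt C by (intro mult_strict_left_mono) simp_all
    also have "\<dots> = e" using C by simp
    finally show ?thesis unfolding dist_real_def .
  qed
  then show "\<exists>d>0. \<forall>x'\<in>S. dist x' x < d \<longrightarrow> dist (f x') (f x) < e" using r by blast
qed

lemma combo_C0:
  assumes "finite T"
  shows "(\<Sum>t\<in>T. fscale (c t) (fb t)) \<in> C0_01"
proof -
  define F where "F = (\<Sum>t\<in>T. fscale (c t) (fb t))"
  have Fe: "F y = (if y \<in> {0..1} then GG (dd T c) y else 0)" for y
    unfolding F_def by (rule combo_eq[OF assms])
  have "\<exists>C. 0 \<le> C \<and> (\<forall>x\<in>{0..1}. \<forall>y\<in>{0..1}. \<bar>GG (dd T c) x - GG (dd T c) y\<bar> \<le> C * \<bar>x - y\<bar> powr (1/2))"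
    by (rule GG_holder[where d="dd T c" and M="\<Sum>t\<in>T. \<bar>c t\<bar>" and \<alpha>="1/2", OF dd_bound]) simp
  then obtain C where C: "0 \<le> C" "\<forall>x\<in>{0..1}. \<forall>y\<in>{0..1}. \<bar>GG (dd T c) x - GG (dd T c) y\<bar> \<le> C * \<bar>x - y\<bar> powr (1/2)"
    by blast
  have "continuous_on {0..1} F"
    by (rule holder_cont[OF C(1)]) (use C(2) Fe in simp)
  moreover have "\<forall>x. x \<notin> {0..1} \<longrightarrow> F x = 0" using Fe by simp
  ultimately show ?thesis unfolding C0_01_def F_def by blast
qed

lemma combo_props:
  assumes T: "finite T" "tz \<in> T" "c tz \<noteq> 0"
  defines "F \<equiv> (\<Sum>t\<in>T. fscale (c t) (fb t))"
  shows "(\<forall>\<alpha>::real. \<alpha> < 1 \<longrightarrow>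
          (\<exists>C::real. \<forall>x \<in> {0..1}. \<forall>y \<in> {0..1}. \<bar>F x - F y\<bar> \<le> C * \<bar>x - y\<bar> powr \<alpha>)) \<and>
       (\<forall>x \<in> {0..<1}. \<not> (\<exists>D. (F has_real_derivative D) (at x within {x..1}))) \<and>
       (\<forall>x \<in> {0<..1}. \<not> (\<exists>D. (F has_real_derivative D) (at x within {0..x}))) \<and>
       (\<forall>c::real. hausdorff_dim {x \<in> {0..1}. F x = c} = 0)"
proof -
  define d where "d = dd T c"
  define M where "M = (\<Sum>t\<in>T. \<bar>c t\<bar>)"
  define m where "m = \<bar>c tz\<bar>"
  have d: "\<And>k. \<bar>d k\<bar> \<le> M" unfolding d_def M_def by (rule dd_bound)
  have m: "0 < m" unfolding m_def using T by simp
  have good: "\<And>K. \<exists>k\<ge>K. m \<le> \<bar>d k\<bar>"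
  proof -
    fix K obtain k where "k \<ge> K" "dd T c k = c tz" using dd_good[OF T(1,2)] by blast
    then show "\<exists>k\<ge>K. m \<le> \<bar>d k\<bar>" unfolding d_def m_def by auto
  qed
  have Fe: "\<And>y. y \<in> {0..1} \<Longrightarrow> F y = GG d y"
    unfolding F_def d_def using combo_eq[OF T(1)] by simp
  have H: "\<exists>C. \<forall>x \<in> {0..1}. \<forall>y \<in> {0..1}. \<bar>F x - F y\<bar> \<le> C * \<bar>x - y\<bar> powr \<alpha>" if a: "\<alpha> < 1" for \<alpha>
  proof -
    obtain C where C: "\<forall>x\<in>{0..1}. \<forall>y\<in>{0..1}. \<bar>GG d x - GG d y\<bar> \<le> C * \<bar>x - y\<bar> powr \<alpha>"
      using GG_holder[where d=d and M=M and \<alpha>=\<alpha>, OF d a] by blast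
    have "\<forall>x \<in> {0..1}. \<forall>y \<in> {0..1}. \<bar>F x - F y\<bar> \<le> C * \<bar>x - y\<bar> powr \<alpha>"
    proof (intro ballI)
      fix x y :: real assume "x \<in> {0..1}" "y \<in> {0..1}"
      then show "\<bar>F x - F y\<bar> \<le> C * \<bar>x - y\<bar> powr \<alpha>" using C Fe by simp
    qed
    then show ?thesis by blast
  qed
  show ?thesis
  proof (intro conjI allI impI ballI)
    fix \<alpha> :: real assume "\<alpha> < 1" then show "\<exists>C. \<forall>x \<in> {0..1}. \<forall>y \<in> {0..1}. \<bar>F x - F y\<bar> \<le> C * \<bar>x - y\<bar> powr \<alpha>"
      by (rule H)
  next
    fix x :: real assume "x \<in> {0..<1}"
    then show "\<not> (\<exists>D. (F has_real_derivative D) (at x within {x..1}))"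
      using nd_right[OF d m good Fe] by blast
  next
    fix x :: real assume "x \<in> {0<..1}"
    then show "\<not> (\<exists>D. (F has_real_derivative D) (at x within {0..x}))"
      using nd_left[OF d m good Fe] by blast
  next
    fix c' :: real show "hausdorff_dim {x \<in> {0..1}. F x = c'} = 0"
      by (rule level_dim0[OF d m good Fe])
  qed
qed

lemma combo_nonzero:
  assumes T: "finite T" "tz \<in> T" "c tz \<noteq> 0"
  shows "(\<Sum>t\<in>T. fscale (c t) (fb t)) \<noteq> 0"
proof
  assume z: "(\<Sum>t\<in>T. fscale (c t) (fb t)) = 0"
  have "\<forall>x \<in> {0..<1}. \<not> (\<exists>D. ((\<Sum>t\<in>T. fscale (c t) (fb t)) has_real_derivative D) (at x within {x..1}))"
    using combo_props[where T=T and tz=tz and c=c, OF T] by blast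
  then have A: "\<forall>x\<in>{0..<1}. \<not> (\<exists>D. ((\<lambda>x. 0::real) has_real_derivative D) (at x within {x..1}))"
    unfolding z zero_fun_def .
  have "(0::real) \<in> {0..<1}" by simp
  with A have "\<not> (\<exists>D. ((\<lambda>x. 0::real) has_real_derivative D) (at 0 within {0..1}))" by force
  moreover have "((\<lambda>x. 0::real) has_real_derivative 0) (at 0 within {0..1})" by (rule DERIV_const)
  ultimately show False by blast
qed

lemma fb_inj: "inj fb"
proof
  fix s t assume e: "fb s = fb t"
  show "s = t"
  proof (rule ccontr)
    assume st: "s \<noteq> t"
    define c where "c = (\<lambda>u. if u = s then (1::real) else -1)"
    have "(\<Sum>u\<in>{s, t}. fscale (c u) (fb u)) \<noteq> 0"
      by (rule combo_nonzero[of "{s,t}" s]) (simp_all add: c_def)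
    moreover have "(\<Sum>u\<in>{s, t}. fscale (c u) (fb u)) = 0"
      using st e by (simp add: c_def fscale_def fun_eq_iff)
    ultimately show False by contradiction
  qed
qed

lemma span_repr:
  assumes "f \<in> fs.span (range fb)"
  shows "\<exists>T c. finite T \<and> f = (\<Sum>t\<in>T. fscale (c t) (fb t))"
proof -
  obtain S r where S: "finite S" "S \<subseteq> range fb" "f = (\<Sum>a\<in>S. fscale (r a) a)"
  proof -
    have "f \<in> {(\<Sum>a\<in>t. fscale (r a) a) | t r. finite t \<and> t \<subseteq> range fb}"
      using assms unfolding fs.span_explicit .
    then show ?thesis using that by (auto simp only: mem_Collect_eq)
  qed
  obtain U where U: "inj_on fb U" "S = fb ` U" using S(2) unfolding subset_image_inj by metis
  have fU: "finite U" using S(1) U by (simp add: finite_image_iff)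
  have "f = (\<Sum>t\<in>U. fscale (r (fb t)) (fb t))" unfolding S(3) U(2) by (simp add: sum.reindex[OF U(1)])
  then show ?thesis using fU by (intro exI[of _ U] exI[of _ "\<lambda>t. r (fb t)"]) simp
qed

lemma span_sub: "fs.span (range fb) \<subseteq> C0_01"
proof
  fix f assume "f \<in> fs.span (range fb)"
  then obtain T c where "finite T" "f = (\<Sum>t\<in>T. fscale (c t) (fb t))" using span_repr by blast
  then show "f \<in> C0_01" using combo_C0 by blast
qed

lemma indep: "\<not> fs.dependent (range fb)"
proof
  assume "fs.dependent (range fb)"
  then obtain S u v where S: "finite S" "S \<subseteq> range fb" "(\<Sum>a\<in>S. fscale (u a) a) = 0" "v \<in> S" "u v \<noteq> 0"
  proof -
    have "\<exists>t u. finite t \<and> t \<subseteq> range fb \<and> (\<Sum>v\<in>t. fscale (u v) v) = 0 \<and> (\<exists>v\<in>t. u v \<noteq> 0)"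
      using \<open>fs.dependent (range fb)\<close> unfolding fs.dependent_explicit .
    then show ?thesis using that by metis
  qed
  obtain U where U: "inj_on fb U" "S = fb ` U" using S(2) unfolding subset_image_inj by metis
  have fU: "finite U" using S(1) U by (simp add: finite_image_iff)
  obtain tz where tz: "tz \<in> U" "v = fb tz" using S(4) U(2) by blast
  have "(\<Sum>t\<in>U. fscale (u (fb t)) (fb t)) \<noteq> 0"
    by (rule combo_nonzero[OF fU tz(1)]) (use S(5) tz in simp)
  moreover have "(\<Sum>t\<in>U. fscale (u (fb t)) (fb t)) = 0"
    using S(3) unfolding U(2) sum.reindex[OF U(1)] by simp
  ultimately show False by contradiction
qed

theorem mainTheorem15:
  shows "\<exists>V :: (real \<Rightarrow> real) set.
    V \<subseteq> C0_01 \<and> module.subspace fscale V \<and>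
    (\<exists>B. B \<subseteq> V \<and> \<not> module.dependent fscale B \<and> module.span fscale B = V \<and>
         B \<approx> (UNIV :: real set)) \<and>
    (\<forall>f \<in> V. f \<noteq> 0 \<longrightarrow>
       (\<forall>\<alpha>::real. \<alpha> < 1 \<longrightarrow>
          (\<exists>C::real. \<forall>x \<in> {0..1}. \<forall>y \<in> {0..1}. \<bar>f x - f y\<bar> \<le> C * \<bar>x - y\<bar> powr \<alpha>)) \<and>
       (\<forall>x \<in> {0..<1}. \<not> (\<exists>D. (f has_real_derivative D) (at x within {x..1}))) \<and>
       (\<forall>x \<in> {0<..1}. \<not> (\<exists>D. (f has_real_derivative D) (at x within {0..x}))) \<and>
       (\<forall>c::real. hausdorff_dim {x \<in> {0..1}. f x = c} = 0))"
proof (intro exI conjI)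
  show "fs.span (range fb) \<subseteq> C0_01" by (rule span_sub)
  show "fs.subspace (fs.span (range fb))" by simp
  show "range fb \<subseteq> fs.span (range fb)" by (rule fs.span_superset)
  show "\<not> fs.dependent (range fb)" by (rule indep)
  show "fs.span (range fb) = fs.span (range fb)" ..
  have "range fb \<approx> (UNIV :: nat set set)" by (rule inj_on_image_eqpoll_self) (use fb_inj in simp)
  then show "range fb \<approx> (UNIV :: real set)" using nat_sets_eqpoll_reals eqpoll_trans by blast
  show "\<forall>f \<in> fs.span (range fb). f \<noteq> 0 \<longrightarrow>
       (\<forall>\<alpha>::real. \<alpha> < 1 \<longrightarrow>
          (\<exists>C::real. \<forall>x \<in> {0..1}. \<forall>y \<in> {0..1}. \<bar>f x - f y\<bar> \<le> C * \<bar>x - y\<bar> powr \<alpha>)) \<and>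
       (\<forall>x \<in> {0..<1}. \<not> (\<exists>D. (f has_real_derivative D) (at x within {x..1}))) \<and>
       (\<forall>x \<in> {0<..1}. \<not> (\<exists>D. (f has_real_derivative D) (at x within {0..x}))) \<and>
       (\<forall>c::real. hausdorff_dim {x \<in> {0..1}. f x = c} = 0)"
  proof (intro ballI impI)
    fix f assume f: "f \<in> fs.span (range fb)" "f \<noteq> 0"
    obtain T c where T: "finite T" "f = (\<Sum>t\<in>T. fscale (c t) (fb t))" using span_repr[OF f(1)] by blast
    have "\<exists>tz\<in>T. c tz \<noteq> 0"
    proof (rule ccontr)
      assume "\<not> ?thesis"
      then have "f = 0" unfolding T(2) by (intro sum.neutral) (auto simp: fscale_def fun_eq_iff)
      then show False using f(2) by contradiction
    qed
    then obtain tz where "tz \<in> T" "c tz \<noteq> 0" by blast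
    show "(\<forall>\<alpha>::real. \<alpha> < 1 \<longrightarrow>
          (\<exists>C::real. \<forall>x \<in> {0..1}. \<forall>y \<in> {0..1}. \<bar>f x - f y\<bar> \<le> C * \<bar>x - y\<bar> powr \<alpha>)) \<and>
       (\<forall>x \<in> {0..<1}. \<not> (\<exists>D. (f has_real_derivative D) (at x within {x..1}))) \<and>
       (\<forall>x \<in> {0<..1}. \<not> (\<exists>D. (f has_real_derivative D) (at x within {0..x}))) \<and>
       (\<forall>c::real. hausdorff_dim {x \<in> {0..1}. f x = c} = 0)"
      unfolding T(2) by (rule combo_props[where T=T and tz=tz and c=c, OF T(1) \<open>tz \<in> T\<close> \<open>c tz \<noteq> 0\<close>])
  qed
qed

end
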